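(* Let $n\ge 2$ and let $b_2,\dots,b_n\in\mathbb{C}$. Consider the differential operator with rational coefficients \[ L_0=\partial^n+b_2z^{-2}\partial^{n-2}+b_3z^{-3}\partial^{n-3}+\cdots+b_nz^{-n},\qquad \partial=\frac{d}{dz}, \] and let $m_0,\dots,m_{n-1}$ be the roots (counted with multiplicity) of the polynomial \[ P(m)=m(m-1)\cdots(m-n+1)+b_2\,m(m-1)\cdots(m-n+3)+\cdots+b_n , \] i.e. $P(m)=0$ exactly when $L_0z^m=0$. Then $L_0$ is algebraically integrable if and only if $m_0,\dots,m_{n-1}$ are integers which are pairwise distinct modulo $n$.
   Context: A differential operator $L$ of order $n$ is called algebraically integrable if there exists a nonzero differential operator $M$ whose order is relatively prime to $n$ such that $[L,M]=LM-ML=0$. The numbers $m_0,\dots,m_{n-1}$ are called the indices of $L_0$ at $0$. *)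

theory Defs
  imports "HOL-Computational_Algebra.Formal_Laurent_Series" "HOL-Computational_Algebra.Polynomial"
begin

text \<open>Differential operators  A = sum_k A_k d^k  (d = d/dz) with coefficients in the
  differential field of formal Laurent series in z; an operator is the list of its
  coefficients, the k-th entry being the coefficient of d^k.\<close>

type_synonym dop = "complex fls list"

definition dop_coeff :: "dop \<Rightarrow> nat \<Rightarrow> complex fls" where
  "dop_coeff A k = (if k < length A then A ! k else 0)"

text \<open>Composition via the Leibniz rule  d^i b = sum_k (i choose k) b^(k) d^(i-k);
  the result is given as its coefficient function.\<close>
definition dop_mult :: "dop \<Rightarrow> dop \<Rightarrow> nat \<Rightarrow> complex fls" where
  "dop_mult A B m =
     (\<Sum>i<length A. \<Sum>j<length B. \<Sum>k\<le>i.
        if i + j = m + k then of_nat (i choose k) * (A ! i) * ((fls_deriv ^^ k) (B ! j)) else 0)"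

definition dop_commute :: "dop \<Rightarrow> dop \<Rightarrow> bool" where
  "dop_commute A B \<longleftrightarrow> (\<forall>m. dop_mult A B m = dop_mult B A m)"

definition dop_nonzero :: "dop \<Rightarrow> bool" where
  "dop_nonzero A \<longleftrightarrow> (\<exists>k. dop_coeff A k \<noteq> 0)"

definition dop_order :: "dop \<Rightarrow> nat" where
  "dop_order A = (GREATEST k. dop_coeff A k \<noteq> 0)"

definition alg_integrable :: "dop \<Rightarrow> bool" where
  "alg_integrable L \<longleftrightarrow>
     (\<exists>M. dop_nonzero M \<and> coprime (dop_order M) (dop_order L) \<and> dop_commute L M)"

definition bcoef :: "(nat \<Rightarrow> complex) \<Rightarrow> nat \<Rightarrow> complex" where
  "bcoef b k = (if k = 0 then 1 else if k = 1 then 0 else b k)"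

definition L0 :: "nat \<Rightarrow> (nat \<Rightarrow> complex) \<Rightarrow> dop" where
  "L0 n b = map (\<lambda>i. fls_const (bcoef b (n - i)) * fls_X_inv ^ (n - i)) [0..<Suc n]"

definition indicial_poly :: "nat \<Rightarrow> (nat \<Rightarrow> complex) \<Rightarrow> complex poly" where
  "indicial_poly n b =
     (\<Sum>k\<le>n. smult (bcoef b k) (\<Prod>j<n - k. [:- of_nat j, 1:]))"

end

theory Submission
  imports Defs "HOL-Computational_Algebra.Fundamental_Theorem_Algebra"
begin

notation fls_nth (infixl \<open>$$\<close> 75)

definition ff :: "nat \<Rightarrow> complex \<Rightarrow> complex" where
  "ff k x = (\<Prod>i<k. x - of_nat i)"

lemma ff_Suc: "ff (Suc k) x = ff k x * (x - of_nat k)"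
  by (simp add: ff_def)

lemma ff_0[simp]: "ff 0 x = 1" by (simp add: ff_def)

lemma deriv_iter_nth:
  "((fls_deriv ^^ k) f) $$ u = ff k (of_int u + of_nat k) * f $$ (u + int k)"
proof (induction k arbitrary: u)
  case 0 then show ?case by simp
next
  case (Suc k)
  have "((fls_deriv ^^ Suc k) f) $$ u = of_int (u+1) * ((fls_deriv ^^ k) f) $$ (u+1)" by simp
  also have "\<dots> = of_int (u+1) * (ff k (of_int (u+1) + of_nat k) * f $$ (u + 1 + int k))"
    using Suc by simp
  also have "ff (Suc k) (of_int u + of_nat (Suc k)) = ff k (of_int (u+1) + of_nat k) * of_int (u+1)"
    by (simp add: ff_Suc algebra_simps)
  ultimately show ?case by (simp add: algebra_simps)
qed

lemma deriv_of_nat_mult: "fls_deriv (of_nat c * h) = of_nat c * fls_deriv h"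
  by simp

lemma leibniz:
  "(fls_deriv ^^ i) (f * g) =
     (\<Sum>k\<le>i. of_nat (i choose k) * (fls_deriv ^^ k) f * (fls_deriv ^^ (i - k)) g)"
proof (induction i)
  case 0 then show ?case by simp
next
  case (Suc i)
  let ?D = "\<lambda>k h. (fls_deriv ^^ k) h"
  have "?D (Suc i) (f*g) = fls_deriv (?D i (f*g))" by simp
  also have "\<dots> = (\<Sum>k\<le>i. of_nat (i choose k) * ?D (Suc k) f * ?D (i-k) g)
       + (\<Sum>k\<le>i. of_nat (i choose k) * ?D k f * ?D (Suc i - k) g)"
    unfolding Suc fls_deriv_sum
    by (simp add: sum.distrib algebra_simps Suc_diff_le)
  also have "(\<Sum>k\<le>i. of_nat (i choose k) * ?D (Suc k) f * ?D (i-k) g)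
     = (\<Sum>k\<le>Suc i. (if k = 0 then 0 else of_nat (i choose (k - 1))) * ?D k f * ?D (Suc i - k) g)"
    by (subst sum.atMost_Suc_shift) simp
  also have "(\<Sum>k\<le>i. of_nat (i choose k) * ?D k f * ?D (Suc i - k) g)
     = (\<Sum>k\<le>Suc i. of_nat (i choose k) * ?D k f * ?D (Suc i - k) g)"
    by (simp add: binomial_eq_0)
  also have "(\<Sum>k\<le>Suc i. (if k = 0 then 0 else of_nat (i choose (k - 1))) * ?D k f * ?D (Suc i - k) g)
      + (\<Sum>k\<le>Suc i. of_nat (i choose k) * ?D k f * ?D (Suc i - k) g)
      = (\<Sum>k\<le>Suc i. of_nat (Suc i choose k) * ?D k f * ?D (Suc i - k) g)"
    unfolding sum.distrib[symmetric]
  proof (rule sum.cong[OF refl])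
    fix k assume "k \<in> {..Suc i}"
    show "(if k = 0 then 0 else of_nat (i choose (k - 1))) * ?D k f * ?D (Suc i - k) g
        + of_nat (i choose k) * ?D k f * ?D (Suc i - k) g
        = of_nat (Suc i choose k) * ?D k f * ?D (Suc i - k) g"
      by (cases k) (simp_all add: algebra_simps)
  qed
  finally show ?case .
qed


definition act :: "(nat \<Rightarrow> complex fls) \<Rightarrow> nat \<Rightarrow> complex fls \<Rightarrow> complex fls" where
  "act C N f = (\<Sum>m<N. C m * (fls_deriv ^^ m) f)"

lemma deriv_iter_sum: "(fls_deriv ^^ i) (sum g S) = (\<Sum>x\<in>S. (fls_deriv ^^ i) (g x))"
  by (induction i) (simp_all add: fls_deriv_sum)

lemma deriv_iter_add: "(fls_deriv ^^ i) ((fls_deriv ^^ j) f) = (fls_deriv ^^ (i + j)) f"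
  by (simp add: funpow_add)

lemma dop_comp:
  "act (dop_mult A B) (length A + length B) f
     = act (dop_coeff A) (length A) (act (dop_coeff B) (length B) f)"
proof -
  let ?D = "\<lambda>k h. (fls_deriv ^^ k) h"
  have "act (dop_coeff A) (length A) (act (dop_coeff B) (length B) f)
     = (\<Sum>i<length A. \<Sum>j<length B. \<Sum>k\<le>i.
          of_nat (i choose k) * (A ! i) * ?D k (B ! j) * ?D (i + j - k) f)"
    unfolding act_def dop_coeff_def
    by (simp add: deriv_iter_sum leibniz sum_distrib_left deriv_iter_add algebra_simps
         Nat.add_diff_assoc2)
  also have "\<dots> = (\<Sum>i<length A. \<Sum>j<length B. \<Sum>k\<le>i. \<Sum>m<length A + length B.
          (if i + j = m + k then of_nat (i choose k) * (A ! i) * ?D k (B ! j) * ?D m f else 0))"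
  proof (intro sum.cong refl)
    fix i j k assume i: "i \<in> {..<length A}" and j: "j \<in> {..<length B}" and k: "k \<in> {..i}"
    have "(\<Sum>m<length A + length B.
          (if i + j = m + k then of_nat (i choose k) * (A ! i) * ?D k (B ! j) * ?D m f else 0))
        = (\<Sum>m<length A + length B.
          (if m = i + j - k then of_nat (i choose k) * (A ! i) * ?D k (B ! j) * ?D m f else 0))"
      using k by (intro sum.cong refl) auto
    also have "\<dots> = of_nat (i choose k) * (A ! i) * ?D k (B ! j) * ?D (i + j - k) f"
      using i j k by (subst sum.delta) auto
    finally show "of_nat (i choose k) * (A ! i) * ?D k (B ! j) * ?D (i + j - k) f = (\<Sum>m<length A + length B.
          (if i + j = m + k then of_nat (i choose k) * (A ! i) * ?D k (B ! j) * ?D m f else 0))" by simp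
  qed
  also have "\<dots> = (\<Sum>i<length A. \<Sum>j<length B. \<Sum>m<length A + length B. \<Sum>k\<le>i.
          (if i + j = m + k then of_nat (i choose k) * (A ! i) * ?D k (B ! j) * ?D m f else 0))"
    by (rule sum.cong[OF refl], rule sum.cong[OF refl], rule sum.swap)
  also have "\<dots> = (\<Sum>i<length A. \<Sum>m<length A + length B. \<Sum>j<length B. \<Sum>k\<le>i.
          (if i + j = m + k then of_nat (i choose k) * (A ! i) * ?D k (B ! j) * ?D m f else 0))"
    by (rule sum.cong[OF refl], rule sum.swap)
  also have "\<dots> = (\<Sum>m<length A + length B. \<Sum>i<length A. \<Sum>j<length B. \<Sum>k\<le>i.
          (if i + j = m + k then of_nat (i choose k) * (A ! i) * ?D k (B ! j) * ?D m f else 0))"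
    by (rule sum.swap)
  also have "\<dots> = act (dop_mult A B) (length A + length B) f"
    unfolding act_def dop_mult_def sum_distrib_right
    by (intro sum.cong refl) simp
  finally show ?thesis by simp
qed


lemma deriv_iter_X:
  "(fls_deriv ^^ m) (fls_X_intpow s) = fls_const (ff m (of_int s)) * fls_X_intpow (s - int m)"
proof (rule fls_eqI)
  fix t
  show "(fls_deriv ^^ m) (fls_X_intpow s) $$ t =
        (fls_const (ff m (of_int s)) * fls_X_intpow (s - int m)) $$ t"
  proof (cases "t = s - int m")
    case True
    then have "complex_of_int t + of_nat m = of_int s" by simp
    with True show ?thesis by (simp add: deriv_iter_nth)
  qed (auto simp: deriv_iter_nth)
qed

lemma times_const_X_nth:
  fixes g :: "complex fls"
  shows
  "(g * (fls_const c * fls_X_intpow i)) $$ t = g $$ (t - i) * c"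
proof -
  have "g * (fls_const c * fls_X_intpow i) = (g * fls_const c) * fls_X_intpow i"
    by (simp add: mult.assoc)
  also have "\<dots> = fls_shift (-i) (g * fls_const c)" by (rule fls_X_intpow_times_conv_shift)
  finally show ?thesis by simp
qed

lemma act_X_nth:
  "act C N (fls_X_intpow s) $$ t = (\<Sum>m<N. C m $$ (t - s + int m) * ff m (of_int s))"
  unfolding act_def deriv_iter_X fls_nth_sum times_const_X_nth
  by (simp add: algebra_simps)


definition ffp :: "nat \<Rightarrow> complex poly" where
  "ffp k = (\<Prod>i<k. [:- of_nat i, 1:])"

lemma poly_ffp[simp]: "poly (ffp k) x = ff k x"
  by (simp add: ffp_def ff_def poly_prod)

lemma sum_rev_atMost: "(\<Sum>k\<le>n. g k) = (\<Sum>i\<le>n. g (n - i :: nat))"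
  by (rule sum.reindex_bij_witness[where i="\<lambda>i. n - i" and j="\<lambda>i. n - i"]) auto

lemma poly_indicial: "poly (indicial_poly n b) x = (\<Sum>i\<le>n. bcoef b (n - i) * ff i x)"
proof -
  have "poly (indicial_poly n b) x = (\<Sum>k\<le>n. bcoef b k * ff (n - k) x)"
    by (simp add: indicial_poly_def poly_sum poly_prod ff_def)
  also have "\<dots> = (\<Sum>i\<le>n. bcoef b (n - i) * ff i x)"
    by (subst sum_rev_atMost) (intro sum.cong refl, simp)
  finally show ?thesis .
qed

lemma length_L0[simp]: "length (L0 n b) = Suc n"
  by (simp add: L0_def)

lemma L0_nth: "i < Suc n \<Longrightarrow> L0 n b ! i = fls_const (bcoef b (n - i)) * fls_X_inv ^ (n - i)"
  by (simp add: L0_def del: upt_Suc)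

lemma const_Xinv_times_nth:
  fixes g :: "complex fls"
  shows "((fls_const c * fls_X_inv ^ k) * g) $$ t = c * g $$ (t + int k)"
proof -
  have eq: "(fls_const c * fls_X_inv ^ k) * g = fls_const c * fls_shift (int k) g"
  proof -
    have "(fls_const c * fls_X_inv ^ k) * g = fls_const c * (fls_X_inv ^ k * g)"
      by (rule mult.assoc)
    also have "fls_X_inv ^ k * g = fls_shift (int k) g"
      by (rule fls_X_inv_power_times_conv_shift(1))
    finally show ?thesis .
  qed
  show ?thesis unfolding eq by simp
qed

lemma act_L0_nth:
  "act (dop_coeff (L0 n b)) (length (L0 n b)) f $$ t
     = poly (indicial_poly n b) (of_int t + of_nat n) * f $$ (t + int n)"
proof -
  have "act (dop_coeff (L0 n b)) (length (L0 n b)) f $$ t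
      = (\<Sum>i<Suc n. bcoef b (n - i) * (ff i (of_int t + of_nat n) * f $$ (t + int n)))"
    unfolding act_def fls_nth_sum length_L0
  proof (intro sum.cong refl)
    fix i assume "i \<in> {..<Suc n}"
    then have i: "i < Suc n" by simp
    then have e: "t + int (n - i) + int i = t + int n" by simp
    have "(dop_coeff (L0 n b) i * (fls_deriv ^^ i) f) $$ t
        = bcoef b (n - i) * ((fls_deriv ^^ i) f) $$ (t + int (n - i))"
      using i by (simp add: dop_coeff_def L0_nth const_Xinv_times_nth)
    also have "\<dots> = bcoef b (n - i) * (ff i (of_int t + of_nat n) * f $$ (t + int n))"
      unfolding deriv_iter_nth e
      by (metis e of_int_add of_int_of_nat_eq)
    finally show "(dop_coeff (L0 n b) i * (fls_deriv ^^ i) f) $$ t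
        = bcoef b (n - i) * (ff i (of_int t + of_nat n) * f $$ (t + int n))" .
  qed
  also have "\<dots> = poly (indicial_poly n b) (of_int t + of_nat n) * f $$ (t + int n)"
    unfolding poly_indicial lessThan_Suc_atMost sum_distrib_right
    by (intro sum.cong refl) (simp add: mult_ac)
  finally show ?thesis .
qed


lemmas act_L0_nth' = act_L0_nth[unfolded length_L0]

lemma act_L0_X:
  "act (dop_coeff (L0 n b)) (length (L0 n b)) (fls_X_intpow s)
     = fls_const (poly (indicial_poly n b) (of_int s)) * fls_X_intpow (s - int n)"
proof (rule fls_eqI)
  fix t
  show "act (dop_coeff (L0 n b)) (length (L0 n b)) (fls_X_intpow s) $$ t =
    (fls_const (poly (indicial_poly n b) (of_int s)) * fls_X_intpow (s - int n)) $$ t"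
  proof (cases "t = s - int n")
    case True
    then have "complex_of_int t + of_nat n = of_int s" by simp
    with True show ?thesis by (simp add: act_L0_nth')
  qed (auto simp: act_L0_nth')
qed

lemma deriv_iter_const_mult:
  "(fls_deriv ^^ m) (fls_const c * g) = fls_const c * (fls_deriv ^^ m) g"
  by (induction m) simp_all

lemma act_const_mult:
  "act C N (fls_const c * g) = fls_const c * act C N g"
  unfolding act_def deriv_iter_const_mult sum_distrib_left
  by (intro sum.cong refl) (simp add: mult_ac)

lemma dop_mult_beyond:
  assumes "length A + length B \<le> m"
  shows "dop_mult A B m = 0"
  unfolding dop_mult_def using assms
  by (intro sum.neutral ballI) auto

lemma commute_act:
  assumes "dop_commute A B"
  shows "act (dop_coeff A) (length A) (act (dop_coeff B) (length B) f)
       = act (dop_coeff B) (length B) (act (dop_coeff A) (length A) f)"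
proof -
  have "dop_mult A B = dop_mult B A" using assms unfolding dop_commute_def by auto
  then show ?thesis using dop_comp[of A B f] dop_comp[of B A f] by (simp add: add.commute)
qed

lemma ff_vanish: "m < m' \<Longrightarrow> ff m' (of_nat m) = 0"
  unfolding ff_def by (rule prod_zero) auto

lemma ff_self_nz: "ff m (of_nat m) \<noteq> 0"
  unfolding ff_def by (subst prod_zero_iff) auto

lemma tri:
  assumes "\<And>k::nat. (\<Sum>m<N. c m * ff m (of_nat k)) = 0"
  shows "m < N \<Longrightarrow> c m = 0"
proof (induction m rule: less_induct)
  case (less m)
  have "(\<Sum>m'<N. c m' * ff m' (of_nat m)) = (\<Sum>m'\<in>{m}. c m' * ff m' (of_nat m))"
  proof (rule sum.mono_neutral_right)
    show "\<forall>i\<in>{..<N} - {m}. c i * ff i (of_nat m) = 0"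
    proof
      fix i assume "i \<in> {..<N} - {m}"
      then have "i < m \<or> m < i" "i < N" by auto
      then show "c i * ff i (of_nat m) = 0" using less ff_vanish by auto
    qed
  qed (use less in auto)
  then have "c m * ff m (of_nat m) = 0" using assms[of m] by simp
  then show ?case using ff_self_nz by simp
qed

lemma act_zero_X:
  assumes "\<And>s. act C N (fls_X_intpow s) = 0" "m < N"
  shows "C m = 0"
proof (rule fls_eqI)
  fix u
  define e where "e = u - int m"
  have "\<And>k::nat. (\<Sum>m<N. C m $$ (e + int m) * ff m (of_nat k)) = 0"
  proof -
    fix k :: nat
    have "act C N (fls_X_intpow (int k)) $$ (e + int k) = 0" using assms(1) by simp
    then show "(\<Sum>m<N. C m $$ (e + int m) * ff m (of_nat k)) = 0"
      unfolding act_X_nth by simp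
  qed
  from tri[OF this assms(2)] show "C m $$ u = 0 $$ u" by (simp add: e_def)
qed

lemma act_diff: "act (\<lambda>m. C m - D m) N f = act C N f - act D N f"
  unfolding act_def by (simp add: sum_subtractf algebra_simps)

lemma act_commute:
  assumes "\<And>s. act (dop_coeff A) (length A) (act (dop_coeff B) (length B) (fls_X_intpow s))
       = act (dop_coeff B) (length B) (act (dop_coeff A) (length A) (fls_X_intpow s))"
  shows "dop_commute A B"
  unfolding dop_commute_def
proof
  fix m
  let ?N = "length A + length B"
  show "dop_mult A B m = dop_mult B A m"
  proof (cases "m < ?N")
    case True
    have "\<And>s. act (\<lambda>m. dop_mult A B m - dop_mult B A m) ?N (fls_X_intpow s) = 0"
      unfolding act_diff using dop_comp[of A B] dop_comp[of B A] assms by (simp add: add.commute)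
    from act_zero_X[OF this True] show ?thesis by simp
  next
    case False
    then show ?thesis using dop_mult_beyond[of A B m] dop_mult_beyond[of B A m] by simp
  qed
qed


lemma lin_prod_degree: "degree (\<Prod>i<k. [:- a i, 1:] :: complex poly) = k"
  by (subst degree_prod_sum_eq) auto

lemma lin_prod_lead: "coeff (\<Prod>i<k. [:- a i, 1:] :: complex poly) k = 1"
  using lead_coeff_prod[of "\<lambda>i. [:- a i, 1:]" "{..<k}"] lin_prod_degree[of a k] by simp

lemma lin_prod_next: "coeff (\<Prod>i<Suc k. [:- a i, 1:] :: complex poly) k = - (\<Sum>i<Suc k. a i)"
proof (induction k)
  case 0 then show ?case by simp
next
  case (Suc k)
  let ?p = "(\<Prod>i<Suc k. [:- a i, 1:] :: complex poly)"
  have "(\<Prod>i<Suc (Suc k). [:- a i, 1:]) = ?p * pCons (- a (Suc k)) [:1:]"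
    by simp
  also have "\<dots> = smult (- a (Suc k)) ?p + pCons 0 ?p"
    by (simp add: mult_pCons_right)
  finally have "coeff (\<Prod>i<Suc (Suc k). [:- a i, 1:]) (Suc k) = - a (Suc k) * coeff ?p (Suc k) + coeff ?p k"
    by simp
  also have "coeff ?p (Suc k) = 1" by (rule lin_prod_lead)
  finally show ?case using Suc by simp
qed

lemma ffp_degree[simp]: "degree (ffp k) = k"
  unfolding ffp_def by (rule lin_prod_degree)

lemma ffp_lead[simp]: "coeff (ffp k) k = 1"
  unfolding ffp_def by (rule lin_prod_lead)

lemma ffp_next: "coeff (ffp (Suc k)) k = - (\<Sum>i<Suc k. of_nat i)"
  unfolding ffp_def by (rule lin_prod_next)

lemma indicial_alt: "indicial_poly n b = (\<Sum>k\<le>n. smult (bcoef b k) (ffp (n - k)))"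
  by (simp add: indicial_poly_def ffp_def)

lemma indicial_coeff: "coeff (indicial_poly n b) j = (\<Sum>k\<le>n. bcoef b k * coeff (ffp (n - k)) j)"
  by (simp add: indicial_alt coeff_sum)

lemma indicial_degree_le: "degree (indicial_poly n b) \<le> n"
  unfolding indicial_alt
  by (rule degree_sum_le) (auto intro: order.trans[OF degree_smult_le])

lemma indicial_coeff_n: "coeff (indicial_poly n b) n = 1"
proof -
  have "coeff (indicial_poly n b) n = (\<Sum>k\<in>{0}. bcoef b k * coeff (ffp (n - k)) n)"
    unfolding indicial_coeff
  proof (rule sum.mono_neutral_right)
    show "\<forall>i\<in>{..n} - {0}. bcoef b i * coeff (ffp (n - i)) n = 0"
      by (auto intro!: coeff_eq_0)
  qed auto
  then show ?thesis by (simp add: bcoef_def)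
qed

lemma indicial_degree: "degree (indicial_poly n b) = n"
  using indicial_degree_le[of n b] indicial_coeff_n[of n b]
  by (metis le_antisym le_degree zero_neq_one)

lemma indicial_lead: "lead_coeff (indicial_poly n b) = 1"
  by (simp add: indicial_degree indicial_coeff_n)

lemma indicial_nz: "indicial_poly n b \<noteq> 0"
  using indicial_lead[of n b] by auto

lemma indicial_coeff_next:
  assumes "n \<ge> 1"
  shows "coeff (indicial_poly n b) (n - 1) = - (\<Sum>i<n. of_nat i)"
proof -
  have "coeff (indicial_poly n b) (n - 1) = (\<Sum>k\<in>{0}. bcoef b k * coeff (ffp (n - k)) (n - 1))"
    unfolding indicial_coeff
  proof (rule sum.mono_neutral_right)
    show "\<forall>i\<in>{..n} - {0}. bcoef b i * coeff (ffp (n - i)) (n - 1) = 0"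
    proof
      fix i assume i: "i \<in> {..n} - {0}"
      show "bcoef b i * coeff (ffp (n - i)) (n - 1) = 0"
      proof (cases "i = 1")
        case True then show ?thesis by (simp add: bcoef_def)
      next
        case False
        with i assms have "degree (ffp (n - i)) < n - 1" by auto
        then show ?thesis by (simp add: coeff_eq_0)
      qed
    qed
  qed auto
  also have "\<dots> = coeff (ffp (Suc (n - 1))) (n - 1)" using assms by (simp add: bcoef_def)
  also have "\<dots> = - (\<Sum>i<Suc (n - 1). of_nat i)" by (rule ffp_next)
  finally show ?thesis using assms by simp
qed


lemma dop_coeff_bound: "dop_coeff A k \<noteq> 0 \<Longrightarrow> k < length A"
  by (auto simp: dop_coeff_def split: if_splits)

lemma order_props:
  assumes "dop_nonzero A"
  shows "dop_coeff A (dop_order A) \<noteq> 0" "\<And>k. dop_order A < k \<Longrightarrow> dop_coeff A k = 0"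
proof -
  obtain k where k: "dop_coeff A k \<noteq> 0" using assms unfolding dop_nonzero_def by auto
  have bnd: "\<And>y. dop_coeff A y \<noteq> 0 \<Longrightarrow> y \<le> length A"
    using dop_coeff_bound by (auto intro: less_imp_le)
  show "dop_coeff A (dop_order A) \<noteq> 0"
    unfolding dop_order_def by (rule GreatestI_nat[where P="\<lambda>k. dop_coeff A k \<noteq> 0", OF k bnd])
  fix j assume "dop_order A < j"
  then show "dop_coeff A j = 0"
    unfolding dop_order_def using Greatest_le_nat[where P="\<lambda>k. dop_coeff A k \<noteq> 0", OF _ bnd, of j] by force
qed

lemma L0_order: "dop_order (L0 n b) = n"
proof -
  have c: "dop_coeff (L0 n b) n = 1"
    by (simp add: dop_coeff_def L0_nth bcoef_def)
  show ?thesis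
    unfolding dop_order_def
  proof (rule Greatest_equality)
    fix y assume "dop_coeff (L0 n b) y \<noteq> 0"
    then show "y \<le> n" using dop_coeff_bound[of "L0 n b" y] by simp
  qed (simp add: c)
qed

definition symb :: "dop \<Rightarrow> int \<Rightarrow> complex \<Rightarrow> complex" where
  "symb M e x = (\<Sum>j<length M. dop_coeff M j $$ (e + int j) * ff j x)"

lemma act_M_X_nth: "act (dop_coeff M) (length M) (fls_X_intpow s) $$ t = symb M (t - s) (of_int s)"
  unfolding act_X_nth symb_def by (simp add: algebra_simps)

lemma symbol_identity:
  assumes "dop_commute (L0 n b) M"
  shows "poly (indicial_poly n b) (of_int s + of_int e) * symb M e (of_int s)
       = poly (indicial_poly n b) (of_int s) * symb M e (of_int s - of_nat n)"
proof -
  let ?L = "L0 n b" and ?P = "poly (indicial_poly n b)"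
  let ?aL = "act (dop_coeff ?L) (length ?L)" and ?aM = "act (dop_coeff M) (length M)"
  define t where "t = e + s - int n"
  have eq: "?aL (?aM (fls_X_intpow s)) $$ t = ?aM (?aL (fls_X_intpow s)) $$ t"
    using commute_act[OF assms] by simp
  have "?aL (?aM (fls_X_intpow s)) $$ t = ?P (of_int s + of_int e) * symb M e (of_int s)"
    unfolding act_L0_nth act_M_X_nth by (simp add: t_def algebra_simps)
  moreover have "?aM (?aL (fls_X_intpow s)) $$ t = ?P (of_int s) * symb M e (of_int s - of_nat n)"
    unfolding act_L0_X act_const_mult fls_mult_const_nth act_M_X_nth by (simp add: t_def algebra_simps)
  ultimately show ?thesis using eq by simp
qed


definition Qp :: "dop \<Rightarrow> int \<Rightarrow> complex poly" where
  "Qp M e = (\<Sum>j<length M. smult (dop_coeff M j $$ (e + int j)) (ffp j))"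

lemma poly_Qp: "poly (Qp M e) x = symb M e x"
  by (simp add: Qp_def symb_def poly_sum)

lemma poly_eq_on_ints:
  fixes p q :: "complex poly"
  assumes "\<And>s::int. poly p (of_int s) = poly q (of_int s)"
  shows "p = q"
proof (rule ccontr)
  assume "p \<noteq> q"
  then have "p - q \<noteq> 0" by simp
  then have fin: "finite {x. poly (p - q) x = 0}" by (rule poly_roots_finite)
  have "range (of_int :: int \<Rightarrow> complex) \<subseteq> {x. poly (p - q) x = 0}"
    using assms by auto
  moreover have "infinite (range (of_int :: int \<Rightarrow> complex))"
  proof
    assume "finite (range (of_int :: int \<Rightarrow> complex))"
    then have "finite (UNIV :: int set)"
      by (rule finite_imageD) (auto simp: inj_on_def)
    then show False by simp
  qed
  ultimately show False using fin finite_subset by blast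
qed

lemma poly_identity:
  assumes "dop_commute (L0 n b) M"
  shows "pcompose (indicial_poly n b) [:of_int e, 1:] * Qp M e
       = indicial_poly n b * pcompose (Qp M e) [:- of_nat n, 1:]"
proof (rule poly_eq_on_ints)
  fix s :: int
  show "poly (pcompose (indicial_poly n b) [:of_int e, 1:] * Qp M e) (of_int s)
      = poly (indicial_poly n b * pcompose (Qp M e) [:- of_nat n, 1:]) (of_int s)"
    using symbol_identity[OF assms, of s e]
    by (simp only: poly_mult poly_pcompose poly_Qp) (simp add: algebra_simps)
qed

lemma Qp_degree:
  assumes "dop_nonzero M" "dop_coeff M (dop_order M) $$ u \<noteq> 0"
  shows "degree (Qp M (u - int (dop_order M))) = dop_order M"
    "coeff (Qp M (u - int (dop_order M))) (dop_order M) \<noteq> 0"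
proof -
  let ?r = "dop_order M" and ?e = "u - int (dop_order M)"
  have z: "\<And>j. ?r < j \<Longrightarrow> dop_coeff M j = 0" using order_props(2)[OF assms(1)] by blast
  have "degree (Qp M ?e) \<le> ?r"
    unfolding Qp_def
  proof (rule degree_sum_le)
    fix j assume "j \<in> {..<length M}"
    show "degree (smult (dop_coeff M j $$ (?e + int j)) (ffp j)) \<le> ?r"
    proof (cases "?r < j")
      case True then show ?thesis using z by simp
    next
      case False then show ?thesis
        using degree_smult_le[of "dop_coeff M j $$ (?e + int j)" "ffp j"] by simp
    qed
  qed simp
  moreover have c: "coeff (Qp M ?e) ?r = dop_coeff M ?r $$ u"
  proof -
    have r: "?r < length M" using order_props(1)[OF assms(1)] dop_coeff_bound by blast
    have "coeff (Qp M ?e) ?r = (\<Sum>j\<in>{?r}. dop_coeff M j $$ (?e + int j) * coeff (ffp j) ?r)"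
      unfolding Qp_def coeff_sum coeff_smult
    proof (rule sum.mono_neutral_right)
      show "\<forall>j\<in>{..<length M} - {?r}. dop_coeff M j $$ (?e + int j) * coeff (ffp j) ?r = 0"
      proof
        fix j assume "j \<in> {..<length M} - {?r}"
        then have "j < ?r \<or> ?r < j" by auto
        then show "dop_coeff M j $$ (?e + int j) * coeff (ffp j) ?r = 0"
          using z by (auto simp: coeff_eq_0)
      qed
    qed (use r in auto)
    then show ?thesis by simp
  qed
  ultimately show "degree (Qp M ?e) = ?r" "coeff (Qp M ?e) ?r \<noteq> 0"
    using assms(2) le_degree[of "Qp M ?e" ?r] by auto
qed


lemma lin_mset_nz: "(\<Prod>x\<in>#A. [:- f x, 1:] :: complex poly) \<noteq> 0"
  by (simp only: prod_mset_zero_iff) auto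

lemma lin_mset_proots: "proots (\<Prod>x\<in>#A. [:- f x, 1:] :: complex poly) = image_mset f A"
proof (induction A)
  case empty then show ?case by simp
next
  case (add x A)
  have "proots (\<Prod>x\<in>#add_mset x A. [:- f x, 1:]) = proots ([:- f x, 1:] * (\<Prod>x\<in>#A. [:- f x, 1:]))"
    by simp
  also have "\<dots> = proots [:- f x, 1:] + proots (\<Prod>x\<in>#A. [:- f x, 1:])"
    by (rule proots_mult) (auto simp: lin_mset_nz)
  finally show ?case using add by simp
qed

lemma pcompose_prod_mset:
  "pcompose (\<Prod>x\<in>#A. g x) q = (\<Prod>x\<in>#A. pcompose (g x) (q :: complex poly))"
  by (induction A) (simp_all add: pcompose_mult pcompose_1)

lemma lin_shift: "pcompose [:- x, 1:] [:c, 1:] = [:- (x - c), 1 :: complex:]"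
  by (simp add: pcompose_pCons pcompose_1)

lemma proots_shift:
  fixes p :: "complex poly"
  assumes "p \<noteq> 0"
  shows "proots (pcompose p [:c, 1:]) = image_mset (\<lambda>a. a - c) (proots p)"
proof -
  have eq: "p = smult (lead_coeff p) (\<Prod>x\<in>#proots p. [:-x, 1:])"
    by (rule complex_poly_decompose_multiset[symmetric])
  have "pcompose p [:c, 1:] = smult (lead_coeff p) (\<Prod>x\<in>#proots p. [:- (x - c), 1:])"
    using arg_cong[OF eq, of "\<lambda>p. pcompose p [:c, 1:]"]
    by (simp only: pcompose_smult pcompose_prod_mset lin_shift)
  also have "proots \<dots> = image_mset (\<lambda>a. a - c) (proots p)"
    using assms lin_mset_proots[of "\<lambda>x. x - c" "proots p"] by simp
  finally show ?thesis .
qed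

lemma sum_mset_shift:
  "sum_mset (image_mset (\<lambda>a. a + c) A) = sum_mset A + of_nat (size A) * (c :: complex)"
  by (induction A) (simp_all add: algebra_simps)

lemma filter_union_disj:
  assumes "finite C" "\<And>c c' a. c \<in> C \<Longrightarrow> c' \<in> C \<Longrightarrow> c \<noteq> c' \<Longrightarrow> P c a \<Longrightarrow> \<not> P c' a"
  shows "filter_mset (\<lambda>a. \<exists>c\<in>C. P c a) R = (\<Sum>c\<in>C. filter_mset (P c) R)"
  using assms
proof (induction C rule: finite_induct)
  case empty then show ?case by simp
next
  case (insert c C)
  have disj: "\<And>a. P c a \<Longrightarrow> \<not> (\<exists>c'\<in>C. P c' a)"
    using insert.prems insert.hyps by blast
  have "filter_mset (\<lambda>a. \<exists>c'\<in>insert c C. P c' a) R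
      = filter_mset (P c) R + filter_mset (\<lambda>a. \<exists>c'\<in>C. P c' a) R"
    using disj by (induction R) auto
  also have "filter_mset (\<lambda>a. \<exists>c'\<in>C. P c' a) R = (\<Sum>c\<in>C. filter_mset (P c) R)"
    using insert by blast
  finally show ?case using insert.hyps by simp
qed


lemma sum_singletons: "finite C \<Longrightarrow> (\<Sum>c\<in>C. {#w c#}) = image_mset w (mset_set C)"
  by (induction C rule: finite_induct) auto

lemma cls_shift:
  fixes a a0 :: complex and n :: nat and c d :: int
  shows "(\<exists>k::int. a + of_int d = a0 + of_int k \<and> k mod int n = c mod int n)
     \<longleftrightarrow> (\<exists>k::int. a = a0 + of_int k \<and> k mod int n = (c - d) mod int n)"
proof
  assume "\<exists>k::int. a + of_int d = a0 + of_int k \<and> k mod int n = c mod int n"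
  then obtain k where k: "a + of_int d = a0 + of_int k" "k mod int n = c mod int n" by blast
  have "a = a0 + of_int (k - d)" using k(1) by (simp add: algebra_simps)
  moreover have "(k - d) mod int n = (c - d) mod int n" using k(2) by (metis mod_diff_left_eq)
  ultimately show "\<exists>k::int. a = a0 + of_int k \<and> k mod int n = (c - d) mod int n" by blast
next
  assume "\<exists>k::int. a = a0 + of_int k \<and> k mod int n = (c - d) mod int n"
  then obtain k where k: "a = a0 + of_int k" "k mod int n = (c - d) mod int n" by blast
  have "a + of_int d = a0 + of_int (k + d)" using k(1) by (simp add: algebra_simps)
  moreover have "(k + d) mod int n = c mod int n" using k(2) by (metis diff_add_cancel mod_add_left_eq)
  ultimately show "\<exists>k::int. a + of_int d = a0 + of_int k \<and> k mod int n = c mod int n" by blast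
qed

lemma modinv_shift:
  fixes r n :: nat and c :: int
  assumes "coprime r n" "n > 0"
  shows "\<exists>j::nat. (0 - int r * int j) mod int n = c mod int n"
proof -
  have "coprime (int r) (int n)" using assms by simp
  then obtain u v where uv: "u * int r + v * int n = 1"
    by (metis bezout_int coprime_iff_gcd_eq_1)
  define w where "w = (- c * u) mod int n"
  have w0: "w \<ge> 0" using assms by (simp add: w_def)
  have "(0 - int r * w) mod int n = (0 - int r * (- c * u)) mod int n"
    unfolding w_def by (metis mod_diff_right_eq mod_mult_right_eq)
  also have "0 - int r * (- c * u) = c * (u * int r)" by (simp add: algebra_simps)
  also have "\<dots> = c - (c * v) * int n"
  proof -
    have h: "u * int r = 1 - v * int n" using uv by linarith
    show ?thesis by (simp only: h right_diff_distrib mult_1_right mult.assoc)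
  qed
  also have "(c - (c * v) * int n) mod int n = c mod int n"
    by (metis add_uminus_conv_diff mult_minus_left mod_mult_self1)
  finally show ?thesis using w0 by (intro exI[of _ "nat w"]) simp
qed

lemma comb:
  fixes R T :: "complex multiset" and n r :: nat
  assumes n: "n \<ge> 1" and sz: "size R = n" and cop: "coprime r n"
    and eq: "image_mset (\<lambda>a. a + of_nat r) R + T = R + image_mset (\<lambda>a. a + of_nat n) T"
  shows "\<exists>a0 kk. (\<forall>c<n. kk c mod int n = int c) \<and>
            R = image_mset (\<lambda>c. a0 + of_int (kk c)) (mset_set {..<n})"
proof -
  obtain a0 where a0: "a0 \<in># R" using sz n by (metis size_empty not_one_le_zero multiset_nonemptyE)
  define cls where "cls c a = (\<exists>k::int. a = a0 + of_int k \<and> k mod int n = c mod int n)" for c a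
  define A where "A c = size (filter_mset (cls c) R)" for c
  have shift: "cls c (a + of_int d) \<longleftrightarrow> cls (c - d) a" for c d a
    unfolding cls_def by (rule cls_shift)
  have Ac: "A (c - int r) = A c" for c
  proof -
    have "size (filter_mset (cls c) (image_mset (\<lambda>a. a + of_nat r) R + T))
        = size (filter_mset (cls c) (R + image_mset (\<lambda>a. a + of_nat n) T))"
      using eq by simp
    moreover have "filter_mset (cls c) (image_mset (\<lambda>a. a + of_nat r) R)
        = image_mset (\<lambda>a. a + of_nat r) (filter_mset (cls (c - int r)) R)"
    proof -
      have "cls c (a + of_nat r) = cls (c - int r) a" for a
        using shift[where c=c and d="int r" and a=a] by simp
      then show ?thesis unfolding filter_mset_image_mset by simp
    qed
    moreover have "filter_mset (cls c) (image_mset (\<lambda>a. a + of_nat n) T)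
        = image_mset (\<lambda>a. a + of_nat n) (filter_mset (cls c) T)"
    proof -
      have "cls c (a + of_nat n) = cls c a" for a
        using shift[where c=c and d="int n" and a=a] unfolding cls_def by simp
      then show ?thesis unfolding filter_mset_image_mset by simp
    qed
    ultimately show ?thesis unfolding A_def by simp
  qed
  have Amod: "A c = A c'" if "c mod int n = c' mod int n" for c c'
    unfolding A_def cls_def using that by simp
  have Aiter: "A (c - int r * int j) = A c" for c j
  proof (induction j)
    case 0 then show ?case by simp
  next
    case (Suc j)
    have "A (c - int r * int (Suc j)) = A ((c - int r * int j) - int r)"
      by (simp add: algebra_simps)
    then show ?case using Ac Suc by simp
  qed
  have Aconst: "A c = A 0" for c
  proof -
    obtain j where "(0 - int r * int j) mod int n = c mod int n"
      using modinv_shift[OF cop] n by auto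
    then have "A c = A (0 - int r * int j)" using Amod by metis
    also have "\<dots> = A 0" by (rule Aiter)
    finally show ?thesis .
  qed
  have A0: "A 0 \<ge> 1"
  proof -
    have "cls 0 a0" unfolding cls_def by (intro exI[of _ 0]) simp
    with a0 have "a0 \<in># filter_mset (cls 0) R" by simp
    then have "filter_mset (cls 0) R \<noteq> {#}" by auto
    then have "size (filter_mset (cls 0) R) \<noteq> 0" by (metis size_eq_0_iff_empty)
    then show ?thesis unfolding A_def by linarith
  qed
  define U where "U = filter_mset (\<lambda>a. \<exists>c\<in>{..<n}. cls (int c) a) R"
  have disj: "\<not> cls (int c') a" if "c \<in> {..<n}" "c' \<in> {..<n}" "c \<noteq> c'" "cls (int c) a" for c c' a
  proof
    assume "cls (int c') a"
    then obtain k' where k': "a = a0 + of_int k'" "k' mod int n = int c' mod int n"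
      unfolding cls_def by blast
    from that(4) obtain k where k: "a = a0 + of_int k" "k mod int n = int c mod int n"
      unfolding cls_def by blast
    from k(1) k'(1) have "k = k'" by simp
    with k k' have "int c mod int n = int c' mod int n" by simp
    with that(1,2) have "c = c'" by simp
    with that(3) show False by simp
  qed
  have U_eq: "U = (\<Sum>c\<in>{..<n}. filter_mset (cls (int c)) R)"
    unfolding U_def by (rule filter_union_disj) (use disj in auto)
  have sizeU: "size U = n * A 0"
  proof -
    have "size U = (\<Sum>c<n. A (int c))" unfolding U_eq size_multiset_sum by (simp add: A_def)
    also have "\<dots> = (\<Sum>c<n. A 0)" by (rule sum.cong[OF refl], rule Aconst)
    finally show ?thesis by simp
  qed
  have "size U \<le> size R" unfolding U_def by (rule size_filter_mset_lesseq)
  then have "size U \<le> n" using sz by simp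
  with sizeU have "n * A 0 \<le> n * 1" by simp
  with n have "A 0 \<le> 1" by (simp only: mult_le_cancel1)
  with A0 have A1: "A 0 = 1" by simp
  have RU: "R = U"
  proof -
    have pR: "R = U + filter_mset (\<lambda>a. \<not> (\<exists>c\<in>{..<n}. cls (int c) a)) R"
      unfolding U_def by (rule multiset_partition)
    moreover have "size U = size R" using sizeU A1 sz by simp
    ultimately have "size (filter_mset (\<lambda>a. \<not> (\<exists>c\<in>{..<n}. cls (int c) a)) R) = 0"
      by (metis add_left_cancel add.right_neutral size_union)
    then have X0: "filter_mset (\<lambda>a. \<not> (\<exists>c\<in>{..<n}. cls (int c) a)) R = {#}"
      by (simp only: size_eq_0_iff_empty)
    show ?thesis by (subst pR, subst X0) simp
  qed
  have "\<forall>c\<in>{..<n}. \<exists>w. filter_mset (cls (int c)) R = {#w#}"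
  proof
    fix c assume "c \<in> {..<n}"
    have "size (filter_mset (cls (int c)) R) = 1" using Aconst[of "int c"] A1 unfolding A_def by simp
    then show "\<exists>w. filter_mset (cls (int c)) R = {#w#}" by (rule size_1_singleton_mset)
  qed
  then obtain w where w: "\<And>c. c \<in> {..<n} \<Longrightarrow> filter_mset (cls (int c)) R = {#w c#}"
    by (auto dest!: bchoice)
  have "\<forall>c\<in>{..<n}. \<exists>k::int. w c = a0 + of_int k \<and> k mod int n = int c"
  proof
    fix c assume c: "c \<in> {..<n}"
    have "w c \<in># filter_mset (cls (int c)) R" using w[OF c] by simp
    then have "cls (int c) (w c)" by simp
    then show "\<exists>k::int. w c = a0 + of_int k \<and> k mod int n = int c"
      unfolding cls_def using c by simp
  qed
  then obtain kk where kk: "\<And>c. c \<in> {..<n} \<Longrightarrow> w c = a0 + of_int (kk c) \<and> kk c mod int n = int c"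
    by (auto dest!: bchoice)
  have "R = (\<Sum>c\<in>{..<n}. {#w c#})" using RU U_eq w by simp
  also have "\<dots> = image_mset w (mset_set {..<n})" by (rule sum_singletons) simp
  also have "\<dots> = image_mset (\<lambda>c. a0 + of_int (kk c)) (mset_set {..<n})"
    by (rule image_mset_cong) (use kk in auto)
  finally show ?thesis using kk by blast
qed


lemma sum_mset_shift':
  "sum_mset (image_mset (\<lambda>a. a - c) A) = sum_mset A - of_nat (size A) * (c :: complex)"
  by (induction A) (simp_all add: algebra_simps)

lemma fls_nz_coeff: "(f :: complex fls) \<noteq> 0 \<Longrightarrow> \<exists>u. f $$ u \<noteq> 0"
  by (metis fls_eqI fls_zero_nth)

lemma poly_combination:
  fixes P Q :: "complex poly" and n r :: nat and e :: int
  assumes n2: "n \<ge> 2" and Pdeg: "degree P = n" and Plead: "lead_coeff P = 1"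
    and Qnz: "Q \<noteq> 0" and Qdeg: "degree Q = r" and cop: "coprime r n"
    and id: "pcompose P [:of_int e, 1:] * Q = P * pcompose Q [:- of_nat n, 1:]"
    and sumc: "coeff P (n - 1) = - (\<Sum>i<n. of_nat i)"
  shows "\<exists>m::nat \<Rightarrow> int. P = (\<Prod>i<n. [:- of_int (m i), 1:]) \<and>
           (\<forall>i<n. \<forall>j<n. i \<noteq> j \<longrightarrow> m i mod int n \<noteq> m j mod int n)"
proof -
  define R where "R = proots P"
  define T where "T = proots Q"
  have Pnz: "P \<noteq> 0" using Plead by auto
  have szR: "size R = n" unfolding R_def using Pdeg by (simp add: size_proots_complex)
  have szT: "size T = r" unfolding T_def using Qdeg by (simp add: size_proots_complex)
  have nz1: "pcompose P [:of_int e, 1:] \<noteq> 0" using Pnz by (simp add: pcompose_eq_0_iff)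
  have nz2: "pcompose Q [:- of_nat n, 1:] \<noteq> 0" using Qnz by (simp add: pcompose_eq_0_iff)
  have "proots (pcompose P [:of_int e, 1:] * Q) = proots (P * pcompose Q [:- of_nat n, 1:])"
    using id by simp
  then have eq0: "image_mset (\<lambda>a. a - of_int e) R + T = R + image_mset (\<lambda>a. a - (- of_nat n)) T"
    unfolding R_def T_def using nz1 nz2 Pnz Qnz by (simp add: proots_mult proots_shift)
  have "sum_mset (image_mset (\<lambda>a. a - of_int e) R + T) = sum_mset (R + image_mset (\<lambda>a. a - (- of_nat n)) T)"
    using eq0 by simp
  then have "sum_mset R - of_nat n * of_int e + sum_mset T = sum_mset R + (sum_mset T - of_nat r * (- of_nat n))"
    by (simp only: sum_mset.union sum_mset_shift' szR szT)
  then have "of_nat n * (of_int e + of_nat r) = (0::complex)" by (simp add: algebra_simps)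
  then have "of_int (e + int r) = (0::complex)" using n2 by simp
  then have e: "e = - int r" by (simp only: of_int_eq_0_iff)
  have eq: "image_mset (\<lambda>a. a + of_nat r) R + T = R + image_mset (\<lambda>a. a + of_nat n) T"
    using eq0 unfolding e by simp
  obtain a0 kk where kk: "\<forall>c<n. kk c mod int n = int c"
    and Rform: "R = image_mset (\<lambda>c. a0 + of_int (kk c)) (mset_set {..<n})"
    using comb[OF _ szR cop eq] n2 by auto
  have "P = smult (lead_coeff P) (\<Prod>x\<in>#R. [:-x, 1:])"
    unfolding R_def by (rule complex_poly_decompose_multiset[symmetric])
  also have "\<dots> = (\<Prod>c<n. [:- (a0 + of_int (kk c)), 1:])"
    unfolding Plead Rform by (simp add: image_mset.compositionality prod_unfold_prod_mset comp_def)
  finally have Pform: "P = (\<Prod>c<n. [:- (a0 + of_int (kk c)), 1:])" .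
  have "coeff P (n - 1) = - (\<Sum>c<n. a0 + of_int (kk c))"
  proof -
    have "Suc (n - 1) = n" using n2 by simp
    then show ?thesis unfolding Pform using lin_prod_next[of "\<lambda>c. a0 + of_int (kk c)" "n - 1"] by simp
  qed
  with sumc have "(\<Sum>c<n. a0 + of_int (kk c)) = (\<Sum>i<n. of_nat i)" by simp
  then have "of_nat n * a0 + of_int (\<Sum>c<n. kk c) = of_int (\<Sum>c<n. int c)"
    by (simp add: sum.distrib)
  then have a0eq: "of_nat n * a0 = of_int ((\<Sum>c<n. int c) - (\<Sum>c<n. kk c))"
    by (simp add: algebra_simps)
  define D where "D = (\<Sum>c<n. int c) - (\<Sum>c<n. kk c)"
  have "(\<Sum>c<n. kk c) mod int n = (\<Sum>c<n. kk c mod int n) mod int n" by (simp add: mod_sum_eq)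
  also have "(\<Sum>c<n. kk c mod int n) = (\<Sum>c<n. int c)" using kk by simp
  finally have "D mod int n = 0" unfolding D_def by (simp add: mod_diff_eq[symmetric])
  then obtain z where z: "D = int n * z" by (metis dvd_def mod_0_imp_dvd)
  have "of_nat n * a0 = of_nat n * (of_int z :: complex)"
    using a0eq z unfolding D_def by simp
  then have a0z: "a0 = of_int z" using n2 by simp
  define m where "m c = z + kk c" for c
  have "P = (\<Prod>i<n. [:- of_int (m i), 1:])" unfolding Pform m_def a0z by simp
  moreover have "m i mod int n \<noteq> m j mod int n" if "i < n" "j < n" "i \<noteq> j" for i j
  proof
    assume "m i mod int n = m j mod int n"
    then have "(z + kk i mod int n) mod int n = (z + kk j mod int n) mod int n"
      unfolding m_def by (metis mod_add_right_eq)
    then have "(z + int i) mod int n = (z + int j) mod int n" using kk that by simp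
    then have "int i mod int n = int j mod int n" by (metis mod_add_left_eq add_diff_cancel_left' mod_diff_left_eq)
    then show False using that by simp
  qed
  ultimately show ?thesis by blast
qed


lemma forward:
  assumes n2: "n \<ge> 2" and ai: "alg_integrable (L0 n b)"
  shows "\<exists>m::nat \<Rightarrow> int. indicial_poly n b = (\<Prod>i<n. [:- of_int (m i), 1:]) \<and>
           (\<forall>i<n. \<forall>j<n. i \<noteq> j \<longrightarrow> m i mod int n \<noteq> m j mod int n)"
proof -
  obtain M where Mnz: "dop_nonzero M" and cop: "coprime (dop_order M) n"
    and comm: "dop_commute (L0 n b) M"
    using ai unfolding alg_integrable_def L0_order by blast
  obtain u where u: "dop_coeff M (dop_order M) $$ u \<noteq> 0"
    using fls_nz_coeff[OF order_props(1)[OF Mnz]] by blast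
  have Qnz: "Qp M (u - int (dop_order M)) \<noteq> 0"
    using Qp_degree(2)[OF Mnz u] by auto
  show ?thesis
    by (rule poly_combination[OF n2 indicial_degree indicial_lead Qnz Qp_degree(1)[OF Mnz u] cop
          poly_identity[OF comm] indicial_coeff_next]) (use n2 in simp)
qed


lemma ffp_expand: "degree q \<le> d \<Longrightarrow> \<exists>c. q = (\<Sum>j\<le>d. smult (c j) (ffp j))"
proof (induction d arbitrary: q)
  case 0
  then have "q = [:coeff q 0:]" using degree_0_id[of q] by simp
  then show ?case by (intro exI[of _ "\<lambda>_. coeff q 0"]) (simp add: ffp_def)
next
  case (Suc d)
  define q' where "q' = q - smult (coeff q (Suc d)) (ffp (Suc d))"
  have "degree q' \<le> d"
  proof (rule degree_le, intro allI impI)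
    fix i assume "d < i"
    then consider "i = Suc d" | "Suc d < i" by linarith
    then show "coeff q' i = 0"
    proof cases
      case 1 then show ?thesis by (simp add: q'_def)
    next
      case 2
      then have "coeff q i = 0" "coeff (ffp (Suc d)) i = 0" using Suc.prems
        by (auto intro!: coeff_eq_0)
      then show ?thesis by (simp add: q'_def)
    qed
  qed
  then obtain c where c: "q' = (\<Sum>j\<le>d. smult (c j) (ffp j))" using Suc.IH by blast
  define c' where "c' = c(Suc d := coeff q (Suc d))"
  have "(\<Sum>j\<le>Suc d. smult (c' j) (ffp j)) = (\<Sum>j\<le>d. smult (c j) (ffp j)) + smult (coeff q (Suc d)) (ffp (Suc d))"
    by (simp add: c'_def)
  also have "\<dots> = q" using c unfolding q'_def by (metis diff_add_cancel)
  finally show ?case by metis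
qed

lemma ffp_expand_lead:
  assumes "q = (\<Sum>j\<le>d. smult (c j) (ffp j))"
  shows "coeff q d = c d"
proof -
  have "coeff q d = (\<Sum>j\<in>{d}. c j * coeff (ffp j) d)"
    unfolding assms coeff_sum coeff_smult
    by (rule sum.mono_neutral_right) (auto intro!: coeff_eq_0)
  then show ?thesis by simp
qed

definition Mop :: "(nat \<Rightarrow> complex) \<Rightarrow> nat \<Rightarrow> dop" where
  "Mop c d = map (\<lambda>j. fls_const (c j) * fls_X_intpow (int j - int d)) [0..<Suc d]"

lemma Mop_length[simp]: "length (Mop c d) = Suc d"
  by (simp add: Mop_def)

lemma Mop_coeff: "j \<le> d \<Longrightarrow> dop_coeff (Mop c d) j = fls_const (c j) * fls_X_intpow (int j - int d)"
  by (simp add: Mop_def dop_coeff_def del: upt_Suc)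

lemma Mop_act_X:
  assumes "q = (\<Sum>j\<le>d. smult (c j) (ffp j))"
  shows "act (dop_coeff (Mop c d)) (length (Mop c d)) (fls_X_intpow s)
     = fls_const (poly q (of_int s)) * fls_X_intpow (s - int d)"
proof (rule fls_eqI)
  fix t
  have "act (dop_coeff (Mop c d)) (length (Mop c d)) (fls_X_intpow s) $$ t
     = (\<Sum>m<Suc d. (if t = s - int d then c m else 0) * ff m (of_int s))"
    unfolding act_X_nth Mop_length
    by (intro sum.cong refl) (simp add: Mop_coeff)
  also have "\<dots> = (if t = s - int d then poly q (of_int s) else 0)"
    unfolding assms by (simp add: poly_sum lessThan_Suc_atMost)
  finally show "act (dop_coeff (Mop c d)) (length (Mop c d)) (fls_X_intpow s) $$ t =
      (fls_const (poly q (of_int s)) * fls_X_intpow (s - int d)) $$ t" by simp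
qed

lemma Mop_order:
  assumes "c d \<noteq> 0"
  shows "dop_order (Mop c d) = d" "dop_nonzero (Mop c d)"
proof -
  have cd: "dop_coeff (Mop c d) d \<noteq> 0" using assms by (simp add: Mop_coeff)
  show "dop_nonzero (Mop c d)" using cd unfolding dop_nonzero_def by blast
  show "dop_order (Mop c d) = d"
    unfolding dop_order_def
  proof (rule Greatest_equality)
    fix y assume "dop_coeff (Mop c d) y \<noteq> 0"
    then show "y \<le> d" using dop_coeff_bound[of "Mop c d" y] by simp
  qed (rule cd)
qed

lemma backward_from_poly:
  fixes Q :: "complex poly" and d n :: nat
  assumes Qdeg: "degree Q = d" and Qlead: "lead_coeff Q = 1" and cop: "coprime d n"
    and id: "\<And>x. poly Q x * poly (indicial_poly n b) (x - of_nat d)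
                 = poly (indicial_poly n b) x * poly Q (x - of_nat n)"
  shows "alg_integrable (L0 n b)"
proof -
  obtain c where c: "Q = (\<Sum>j\<le>d. smult (c j) (ffp j))" using ffp_expand[of Q d] Qdeg by auto
  have cd: "c d = 1" using ffp_expand_lead[OF c] Qlead Qdeg by simp
  let ?M = "Mop c d" and ?L = "L0 n b" and ?P = "poly (indicial_poly n b)"
  have comm: "dop_commute ?L ?M"
  proof (rule act_commute)
    fix s
    have "act (dop_coeff ?L) (length ?L) (act (dop_coeff ?M) (length ?M) (fls_X_intpow s))
        = fls_const (poly Q (of_int s) * ?P (of_int (s - int d))) * fls_X_intpow (s - int d - int n)"
      unfolding Mop_act_X[OF c] act_const_mult act_L0_X by (simp add: mult.assoc)
    also have "\<dots> = fls_const (?P (of_int s) * poly Q (of_int (s - int n))) * fls_X_intpow (s - int n - int d)"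
      using id[of "of_int s"] by (simp add: algebra_simps)
    also have "\<dots> = act (dop_coeff ?M) (length ?M) (act (dop_coeff ?L) (length ?L) (fls_X_intpow s))"
      unfolding Mop_act_X[OF c] act_const_mult act_L0_X by (simp add: mult.assoc)
    finally show "act (dop_coeff ?L) (length ?L) (act (dop_coeff ?M) (length ?M) (fls_X_intpow s))
        = act (dop_coeff ?M) (length ?M) (act (dop_coeff ?L) (length ?L) (fls_X_intpow s))" .
  qed
  show ?thesis
    unfolding alg_integrable_def
    using Mop_order[of c d] cd cop comm L0_order[of n b] by auto
qed


lemma tele:
  fixes x c :: complex
  shows "(\<Prod>j<k. (x - (c + of_nat n * of_nat j))) * (x - (c + of_nat n * of_nat k))
       = (x - c) * (\<Prod>j<k. ((x - of_nat n) - (c + of_nat n * of_nat j)))"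
proof -
  have "(\<Prod>j<k. (x - (c + of_nat n * of_nat j))) * (x - (c + of_nat n * of_nat k))
      = (\<Prod>j<Suc k. (x - (c + of_nat n * of_nat j)))" by simp
  also have "\<dots> = (x - c) * (\<Prod>j<k. (x - (c + of_nat n * of_nat (Suc j))))"
    by (subst prod.lessThan_Suc_shift) simp
  also have "(\<Prod>j<k. (x - (c + of_nat n * of_nat (Suc j)))) = (\<Prod>j<k. ((x - of_nat n) - (c + of_nat n * of_nat j)))"
    by (intro prod.cong refl) (simp add: algebra_simps)
  finally show ?thesis .
qed

lemma residues_surj:
  fixes m :: "nat \<Rightarrow> int"
  assumes n: "n \<ge> 1" and dist: "\<forall>i<n. \<forall>j<n. i \<noteq> j \<longrightarrow> m i mod int n \<noteq> m j mod int n"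
  shows "\<exists>j<n. m j mod int n = t mod int n"
proof -
  let ?f = "\<lambda>i. m i mod int n"
  have inj: "inj_on ?f {..<n}" using dist unfolding inj_on_def by auto
  have sub: "?f ` {..<n} \<subseteq> {0..<int n}" using n by auto
  have "card (?f ` {..<n}) = card {0..<int n}" using card_image[OF inj] by simp
  then have "?f ` {..<n} = {0..<int n}" using sub by (intro card_subset_eq) auto
  moreover have "t mod int n \<in> {0..<int n}" using n by auto
  ultimately show ?thesis by (metis (no_types, lifting) image_iff lessThan_iff)
qed

lemma backward:
  fixes m :: "nat \<Rightarrow> int"
  assumes n2: "n \<ge> 2" and Pf: "indicial_poly n b = (\<Prod>i<n. [:- of_int (m i), 1:])"
    and dist: "\<forall>i<n. \<forall>j<n. i \<noteq> j \<longrightarrow> m i mod int n \<noteq> m j mod int n"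
  shows "alg_integrable (L0 n b)"
proof -
  have "\<forall>i\<in>{..<n}. \<exists>j. j < n \<and> m j mod int n = (m i + 1) mod int n"
    using residues_surj[OF _ dist] n2 by auto
  then obtain \<sigma> where \<sigma>: "\<And>i. i < n \<Longrightarrow> \<sigma> i < n \<and> m (\<sigma> i) mod int n = (m i + 1) mod int n"
    by (auto dest!: bchoice)
  have inj: "inj_on \<sigma> {..<n}"
  proof (rule inj_onI)
    fix i i' assume i: "i \<in> {..<n}" "i' \<in> {..<n}" "\<sigma> i = \<sigma> i'"
    then have "(m i + 1) mod int n = (m i' + 1) mod int n" using \<sigma> by (metis lessThan_iff)
    then have "m i mod int n = m i' mod int n"
      by (metis add_diff_cancel_right' mod_diff_left_eq)
    then show "i = i'" using dist i by auto
  qed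
  have bij: "bij_betw \<sigma> {..<n} {..<n}"
  proof -
    have "\<sigma> ` {..<n} = {..<n}" by (rule endo_inj_surj) (use \<sigma> inj in auto)
    then show ?thesis unfolding bij_betw_def using inj by simp
  qed
  define S where "S = (\<Sum>i<n. \<bar>m i\<bar>)"
  have S: "\<bar>m i\<bar> \<le> S" if "i < n" for i
    unfolding S_def using that by (intro member_le_sum) auto
  define R0 where "R0 = 1 + n * nat S"
  have R0ge: "int R0 \<ge> 1 + 2 * S"
  proof -
    have "S \<ge> 0" unfolding S_def by (intro sum_nonneg) auto
    then have "int (n * nat S) \<ge> 2 * S" using n2 by (simp add: mult_right_mono)
    then show ?thesis unfolding R0_def by simp
  qed
  define kk where "kk i = nat ((m i + int R0 - m (\<sigma> i)) div int n)" for i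
  have kk: "int n * int (kk i) = m i + int R0 - m (\<sigma> i)" if "i < n" for i
  proof -
    have pos: "m i + int R0 - m (\<sigma> i) \<ge> 0" using S[OF that] S[of "\<sigma> i"] \<sigma>[OF that] R0ge by auto
    have e1: "m i + int R0 = (m i + 1) + int (nat S) * int n"
      unfolding R0_def by (simp add: algebra_simps)
    have "(m i + int R0) mod int n = (m i + 1) mod int n"
      unfolding e1 by (rule mod_mult_self1)
    then have "(m i + int R0) mod int n = m (\<sigma> i) mod int n" using \<sigma>[OF that] by simp
    then have "int n dvd (m i + int R0 - m (\<sigma> i))" by (simp add: mod_eq_dvd_iff)
    then obtain q where q: "m i + int R0 - m (\<sigma> i) = int n * q" by (elim dvdE)
    have "q \<ge> 0" using pos q n2 by (simp add: zero_le_mult_iff)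
    moreover have "(m i + int R0 - m (\<sigma> i)) div int n = q" using q n2 by simp
    ultimately show ?thesis unfolding kk_def using q by simp
  qed
  define Q where "Q = (\<Prod>i<n. \<Prod>j<kk i. [:- (of_int (m (\<sigma> i)) + of_nat n * of_nat j), 1:] :: complex poly)"
  have Qdeg: "degree Q = (\<Sum>i<n. kk i)"
    unfolding Q_def by (subst degree_prod_sum_eq; simp add: degree_prod_sum_eq)
  have Qlead: "lead_coeff Q = 1"
    unfolding Q_def by (simp add: lead_coeff_prod)
  have sumkk: "(\<Sum>i<n. kk i) = R0"
  proof -
    have "int n * int (\<Sum>i<n. kk i) = (\<Sum>i<n. int n * int (kk i))" by (simp add: sum_distrib_left)
    also have "\<dots> = (\<Sum>i<n. m i + int R0 - m (\<sigma> i))" using kk by simp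
    also have "\<dots> = (\<Sum>i<n. m i) + int n * int R0 - (\<Sum>i<n. m (\<sigma> i))"
      by (simp add: sum_subtractf sum.distrib)
    also have "(\<Sum>i<n. m (\<sigma> i)) = (\<Sum>i<n. m i)" by (rule sum.reindex_bij_betw[OF bij])
    finally have "int n * int (\<Sum>i<n. kk i) = int n * int R0" by simp
    then have "int (\<Sum>i<n. kk i) = int R0" using n2 by (simp only: mult_cancel_left) simp
    then show ?thesis by (simp only: of_nat_eq_iff)
  qed
  have cop: "coprime R0 n"
    unfolding R0_def by (metis coprime_Suc_left_nat coprime_mult_right_iff plus_1_eq_Suc)
  have id: "poly Q x * poly (indicial_poly n b) (x - of_nat R0)
       = poly (indicial_poly n b) x * poly Q (x - of_nat n)" for x
  proof -
    let ?A = "\<lambda>i y. (\<Prod>j<kk i. (y - (of_int (m (\<sigma> i)) + of_nat n * of_nat j)))"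
    have pQ: "poly Q y = (\<Prod>i<n. ?A i y)" for y
      unfolding Q_def poly_prod by (intro prod.cong refl) (simp add: algebra_simps)
    have pP: "poly (indicial_poly n b) y = (\<Prod>i<n. y - of_int (m i))" for y
      unfolding Pf by (simp add: poly_prod)
    have "poly Q x * poly (indicial_poly n b) (x - of_nat R0)
        = (\<Prod>i<n. ?A i x * (x - (of_int (m (\<sigma> i)) + of_nat n * of_nat (kk i))))"
    proof -
      have "x - of_nat R0 - of_int (m i) = x - (of_int (m (\<sigma> i)) + of_nat n * of_nat (kk i))"
        if "i < n" for i
      proof -
        have "of_int (int n * int (kk i)) = (of_int (m i + int R0 - m (\<sigma> i)) :: complex)"
          using kk[OF that] by simp
        then show ?thesis by (simp add: algebra_simps)
      qed
      then show ?thesis unfolding pQ pP prod.distrib[symmetric] by (intro prod.cong refl) auto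
    qed
    also have "\<dots> = (\<Prod>i<n. (x - of_int (m (\<sigma> i))) * ?A i (x - of_nat n))"
      by (intro prod.cong refl) (rule tele)
    also have "\<dots> = (\<Prod>i<n. x - of_int (m (\<sigma> i))) * poly Q (x - of_nat n)"
      unfolding pQ prod.distrib ..
    also have "(\<Prod>i<n. x - of_int (m (\<sigma> i))) = (\<Prod>i<n. x - of_int (m i))"
      by (rule prod.reindex_bij_betw[OF bij, of "\<lambda>i. x - of_int (m i)"])
    finally show ?thesis unfolding pP .
  qed
  show ?thesis
    by (rule backward_from_poly[OF _ Qlead cop id]) (simp add: Qdeg sumkk)
qed



theorem proposition2p3:
  fixes n :: nat and b :: "nat \<Rightarrow> complex"
  assumes "n \<ge> 2"
  shows "alg_integrable (L0 n b) \<longleftrightarrow>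
    (\<exists>m :: nat \<Rightarrow> int.
        indicial_poly n b = (\<Prod>i<n. [:- of_int (m i), 1:]) \<and>
        (\<forall>i<n. \<forall>j<n. i \<noteq> j \<longrightarrow> m i mod int n \<noteq> m j mod int n))"
proof
  assume "alg_integrable (L0 n b)"
  then show "\<exists>m :: nat \<Rightarrow> int.
        indicial_poly n b = (\<Prod>i<n. [:- of_int (m i), 1:]) \<and>
        (\<forall>i<n. \<forall>j<n. i \<noteq> j \<longrightarrow> m i mod int n \<noteq> m j mod int n)"
    by (rule forward[OF assms])
next
  assume "\<exists>m :: nat \<Rightarrow> int.
        indicial_poly n b = (\<Prod>i<n. [:- of_int (m i), 1:]) \<and>
        (\<forall>i<n. \<forall>j<n. i \<noteq> j \<longrightarrow> m i mod int n \<noteq> m j mod int n)"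
  then obtain m :: "nat \<Rightarrow> int" where
    "indicial_poly n b = (\<Prod>i<n. [:- of_int (m i), 1:])"
    "\<forall>i<n. \<forall>j<n. i \<noteq> j \<longrightarrow> m i mod int n \<noteq> m j mod int n"
    by blast
  then show "alg_integrable (L0 n b)" by (rule backward[OF assms])
qed

end
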